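(* Let $G$ be a finite simple graph with vertices $v_1,\dots,v_n$ ($n\ge 1$) in which no vertex is adjacent to all other vertices, let $d\ge 1$ be an integer, let $G'$ be the graph constructed from $(G,d)$ as described in the context, and let $h=n(n+1)+d$. Suppose $S_1,\dots,S_h$ are pairwise disjoint vertex sets of $G'$, each inducing a connected subgraph, such that for all $i\ne j$ some edge of $G'$ joins a vertex of $S_i$ to a vertex of $S_j$. Then each $S_i$ contains exactly one non-middle (i.e. top or bottom) vertex, and each non-middle vertex of $G'$ belongs to exactly one of the sets $S_i$.
   Context: Construction of $G'$ from a graph $G$ with vertices $v_1,\dots,v_n$ and an integer $d$: say $v_i$ dominates $v_j$ if $v_i=v_j$ or $v_iv_j$ is an edge of $G$. The vertex set of $G'$ consists of top vertices $t_1,\dots,t_d$, middle vertices $m_1,\dots,m_n$, and bottom vertices $b_{j,k}$ for $1\le j\le n$, $1\le k\le n+1$. Edges: the top vertices form a clique; the middle vertices form an independent set; the bottom vertices form a clique (of size $n(n+1)$); every top vertex is adjacent to every middle vertex; there are no top–bottom edges; middle vertex $m_i$ is adjacent to bottom vertex $b_{j,k}$ if and only if $v_i$ dominates $v_j$ in $G$. *)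

theory Defs
  imports Main
begin

text \<open>The graph G has vertices 0..n-1 (standing for v_1..v_n) and a symmetric,
irreflexive adjacency relation E. Vertices of G' (0-indexed):
Top i (i < d), Mid i (i < n), Bot j k (j < n, k < n+1).\<close>

datatype gvert = Top nat | Mid nat | Bot nat nat

definition simple_graph :: "nat \<Rightarrow> (nat \<Rightarrow> nat \<Rightarrow> bool) \<Rightarrow> bool" where
  "simple_graph n E \<longleftrightarrow> (\<forall>i j. E i j \<longrightarrow> i < n \<and> j < n) \<and>
     (\<forall>i j. E i j \<longrightarrow> E j i) \<and> (\<forall>i. \<not> E i i)"

definition dominates :: "(nat \<Rightarrow> nat \<Rightarrow> bool) \<Rightarrow> nat \<Rightarrow> nat \<Rightarrow> bool" where
  "dominates E i j \<longleftrightarrow> i = j \<or> E i j"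

definition Gp_verts :: "nat \<Rightarrow> nat \<Rightarrow> gvert set" where
  "Gp_verts n d = Top ` {..<d} \<union> Mid ` {..<n} \<union> {Bot j k | j k. j < n \<and> k < n + 1}"

fun Gp_adj0 :: "(nat \<Rightarrow> nat \<Rightarrow> bool) \<Rightarrow> gvert \<Rightarrow> gvert \<Rightarrow> bool" where
  "Gp_adj0 E (Top a) (Top b) = (a \<noteq> b)"
| "Gp_adj0 E (Mid a) (Mid b) = False"
| "Gp_adj0 E (Bot a b) (Bot c e) = ((a, b) \<noteq> (c, e))"
| "Gp_adj0 E (Top a) (Mid b) = True"
| "Gp_adj0 E (Mid b) (Top a) = True"
| "Gp_adj0 E (Top a) (Bot b c) = False"
| "Gp_adj0 E (Bot b c) (Top a) = False"
| "Gp_adj0 E (Mid i) (Bot j k) = dominates E i j"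
| "Gp_adj0 E (Bot j k) (Mid i) = dominates E i j"

definition Gp_adj :: "nat \<Rightarrow> nat \<Rightarrow> (nat \<Rightarrow> nat \<Rightarrow> bool) \<Rightarrow> gvert \<Rightarrow> gvert \<Rightarrow> bool" where
  "Gp_adj n d E x y \<longleftrightarrow> x \<in> Gp_verts n d \<and> y \<in> Gp_verts n d \<and> Gp_adj0 E x y"

definition induces_connected :: "('a \<Rightarrow> 'a \<Rightarrow> bool) \<Rightarrow> 'a set \<Rightarrow> bool" where
  "induces_connected A S \<longleftrightarrow> S \<noteq> {} \<and>
     (\<forall>x\<in>S. \<forall>y\<in>S. (\<lambda>u v. u \<in> S \<and> v \<in> S \<and> A u v)\<^sup>*\<^sup>* x y)"

definition is_middle :: "gvert \<Rightarrow> bool" where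
  "is_middle v \<longleftrightarrow> (\<exists>i. v = Mid i)"

end

theory Submission
  imports Defs
begin

lemma bot_set_eq: "{Bot j k | j k. j < n \<and> k < n + 1} = (\<lambda>(j,k). Bot j k) ` ({..<n} \<times> {..<n+1})"
  by auto

lemma card_bot: "card {Bot j k | j k. j < n \<and> k < n + 1} = n * (n+1)"
proof -
  have "inj_on (\<lambda>(j,k). Bot j k) ({..<n} \<times> {..<n+1})" by (auto simp: inj_on_def)
  then show ?thesis unfolding bot_set_eq by (simp add: card_image)
qed

lemma finite_verts: "finite (Gp_verts n d)"
  unfolding Gp_verts_def bot_set_eq by auto

lemma nonmid_eq: "Gp_verts n d \<inter> {v. \<not> is_middle v} = Top ` {..<d} \<union> {Bot j k | j k. j < n \<and> k < n + 1}"
  unfolding Gp_verts_def is_middle_def by auto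

lemma card_nonmid: "card (Gp_verts n d \<inter> {v. \<not> is_middle v}) = n * (n+1) + d"
proof -
  have fb: "finite {Bot j k | j k. j < n \<and> k < n + 1}" unfolding bot_set_eq by auto
  have "card (Top ` {..<d} \<union> {Bot j k | j k. j < n \<and> k < n + 1}) =
        card (Top ` {..<d}) + card {Bot j k | j k. j < n \<and> k < n + 1}"
    by (rule card_Un_disjoint) (use fb in auto)
  also have "card (Top ` {..<d}) = d" by (simp add: card_image inj_on_def)
  finally show ?thesis unfolding nonmid_eq card_bot by simp
qed

lemma mid_singleton:
  assumes "induces_connected (Gp_adj n d E) S" and "\<forall>v\<in>S. is_middle v"
    and "x \<in> S" and "y \<in> S"
  shows "x = y"
proof -
  have "(\<lambda>u v. u \<in> S \<and> v \<in> S \<and> Gp_adj n d E u v)\<^sup>*\<^sup>* x y"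
    using assms unfolding induces_connected_def by blast
  then show ?thesis
  proof (cases rule: converse_rtranclpE)
    case (step z)
    obtain p q where "x = Mid p" "z = Mid q" using assms(2) step unfolding is_middle_def by blast
    then show ?thesis using step unfolding Gp_adj_def by auto
  qed simp
qed

theorem lemma3:
  fixes n d :: nat and E :: "nat \<Rightarrow> nat \<Rightarrow> bool" and S :: "nat \<Rightarrow> gvert set"
  assumes "simple_graph n E"
    and "n \<ge> 1"
    and "\<forall>i<n. \<exists>j<n. j \<noteq> i \<and> \<not> E i j"
    and "d \<ge> 1"
    and "h = n * (n + 1) + d"
    and "\<forall>i<h. S i \<subseteq> Gp_verts n d"
    and "\<forall>i<h. \<forall>j<h. i \<noteq> j \<longrightarrow> S i \<inter> S j = {}"
    and "\<forall>i<h. induces_connected (Gp_adj n d E) (S i)"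
    and "\<forall>i<h. \<forall>j<h. i \<noteq> j \<longrightarrow> (\<exists>x\<in>S i. \<exists>y\<in>S j. Gp_adj n d E x y)"
  shows "(\<forall>i<h. \<exists>!v. v \<in> S i \<and> \<not> is_middle v) \<and>
         (\<forall>v\<in>Gp_verts n d. \<not> is_middle v \<longrightarrow> (\<exists>!i. i < h \<and> v \<in> S i))"
proof -
  define N where "N = Gp_verts n d \<inter> {v. \<not> is_middle v}"
  have fN: "finite N" unfolding N_def using finite_verts by auto
  have cN: "card N = h" unfolding N_def using card_nonmid assms(5) by simp
  define T where "T i = S i \<inter> {v. \<not> is_middle v}" for i
  have TN: "T i \<subseteq> N" if "i < h" for i using assms(6) that unfolding T_def N_def by auto
  have Tne: "T i \<noteq> {}" if ih: "i < h" for i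
  proof
    assume T0: "T i = {}"
    then have allmid: "\<forall>v\<in>S i. is_middle v" unfolding T_def by auto
    obtain x where x: "x \<in> S i" using assms(8) ih unfolding induces_connected_def by blast
    then obtain a where xa: "x = Mid a" using allmid unfolding is_middle_def by blast
    have Si: "S i = {x}" using mid_singleton[OF _ allmid] assms(8) ih x by blast
    have "x \<in> Gp_verts n d" using x assms(6) ih by blast
    then have an: "a < n" unfolding xa Gp_verts_def by auto
    obtain c where c: "c < n" "c \<noteq> a" "\<not> E a c" using assms(3) an by blast
    define B where "B = Bot c ` {..<n+1}"
    have cB: "card B = n + 1" unfolding B_def by (simp add: card_image inj_on_def)
    have BN: "B \<subseteq> N" unfolding B_def N_def Gp_verts_def is_middle_def using c by auto
    have "\<forall>j\<in>{..<h} - {i}. \<exists>y. y \<in> S j \<and> Gp_adj n d E x y"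
      using assms(9) ih Si by (metis DiffE insertCI lessThan_iff singletonD)
    then obtain f where f: "\<And>j. j \<in> {..<h} - {i} \<Longrightarrow> f j \<in> S j \<and> Gp_adj n d E x (f j)"
      by metis
    have fim: "f ` ({..<h} - {i}) \<subseteq> N - B"
    proof
      fix y assume "y \<in> f ` ({..<h} - {i})"
      then obtain j where j: "j \<in> {..<h} - {i}" "y = f j" by blast
      have adj: "Gp_adj n d E (Mid a) y" using f[OF j(1)] j xa by simp
      then have "y \<in> Gp_verts n d" unfolding Gp_adj_def by simp
      moreover have "\<not> is_middle y" using adj unfolding Gp_adj_def is_middle_def by auto
      moreover have "y \<notin> B" using adj c unfolding B_def Gp_adj_def by (auto simp: dominates_def)
      ultimately show "y \<in> N - B" unfolding N_def by simp
    qed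
    have finj: "inj_on f ({..<h} - {i})"
    proof (rule inj_onI)
      fix j k assume j: "j \<in> {..<h} - {i}" and k: "k \<in> {..<h} - {i}" and e: "f j = f k"
      show "j = k"
      proof (rule ccontr)
        assume "j \<noteq> k"
        then have "S j \<inter> S k = {}" using assms(7) j k by auto
        then show False using f[OF j] f[OF k] e by auto
      qed
    qed
    have "card ({..<h} - {i}) \<le> card (N - B)"
      using card_inj_on_le[OF finj fim] fN by simp
    moreover have "card ({..<h} - {i}) = h - 1" using ih by simp
    moreover have "card (N - B) = h - (n+1)" using card_Diff_subset[OF _ BN] fN BN cN cB
      by (metis finite_subset)
    moreover have "n * (n+1) \<ge> n+1" using assms(2) by simp
    then have "h \<ge> n + 2" using assms(4,5) by linarith
    ultimately show False using assms(2) by linarith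
  qed
  have Tdisj: "T i \<inter> T j = {}" if "i < h" "j < h" "i \<noteq> j" for i j
    using assms(7) that unfolding T_def by auto
  have fT: "finite (T i)" if "i < h" for i using TN[OF that] fN finite_subset by blast
  have cU: "card (\<Union>i<h. T i) = (\<Sum>i<h. card (T i))"
    by (rule card_UN_disjoint) (use fT Tdisj in auto)
  have UN: "(\<Union>i<h. T i) \<subseteq> N" using TN by blast
  have cle: "(\<Sum>i<h. card (T i)) \<le> h"
    using card_mono[OF fN UN] cU cN by simp
  have c1: "card (T i) = 1" if ih: "i < h" for i
  proof (rule ccontr)
    assume "card (T i) \<noteq> 1"
    moreover have "card (T i) \<noteq> 0" using Tne[OF ih] fT[OF ih] by simp
    ultimately have ge2: "card (T i) \<ge> 2" by linarith
    have "(\<Sum>i<h. card (T i)) = card (T i) + (\<Sum>j\<in>{..<h} - {i}. card (T j))"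
      using ih by (simp add: sum.remove)
    moreover have "(h - 1) * 1 \<le> (\<Sum>j\<in>{..<h} - {i}. card (T j))"
    proof -
      have "card ({..<h} - {i}) * 1 \<le> (\<Sum>j\<in>{..<h} - {i}. card (T j))"
        using sum_bounded_below[of "{..<h} - {i}" 1 "\<lambda>j. card (T j)"] Tne fT
        by (simp add: Suc_le_eq card_gt_0_iff)
      then show ?thesis using ih by simp
    qed
    ultimately show False using cle ge2 ih by linarith
  qed
  have Ueq: "(\<Union>i<h. T i) = N"
  proof (rule card_subset_eq[OF fN UN])
    show "card (\<Union>i<h. T i) = card N" using cU c1 cN by simp
  qed
  show ?thesis
  proof (intro conjI allI impI ballI)
    fix i assume ih: "i < h"
    obtain v where "T i = {v}" using c1[OF ih] card_1_singletonE by blast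
    then show "\<exists>!v. v \<in> S i \<and> \<not> is_middle v" unfolding T_def by (metis (mono_tags, lifting) IntI mem_Collect_eq singletonD singletonI IntE)
  next
    fix v assume "v \<in> Gp_verts n d" "\<not> is_middle v"
    then have "v \<in> N" unfolding N_def by simp
    then obtain i where i: "i < h" "v \<in> T i" using Ueq by blast
    show "\<exists>!i. i < h \<and> v \<in> S i"
    proof (rule ex1I[of _ i])
      show "i < h \<and> v \<in> S i" using i unfolding T_def by simp
    next
      fix j assume "j < h \<and> v \<in> S j"
      then show "j = i" using assms(7) i unfolding T_def by blast
    qed
  qed
qed

end
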